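(* Let $\widehat{\Gamma}$ be a Harnack graph with controlled, uniformly lazy weights $(\pi,\mu)$, $K$ a set of vertices, $\Gamma:=\widehat\Gamma\setminus K$, and $V_{\partial\Gamma}(x,r)=\pi(B_{\widehat\Gamma}(x,r)\cap\partial\Gamma)$. Assume in addition that $V_{\partial\Gamma}$ is doubling: there is $D>0$ with $V_{\partial\Gamma}(z,2r)\le D\,V_{\partial\Gamma}(z,r)$ for all $z\in\partial\Gamma$, $r>0$. For $x\in\Gamma$ let $v_x\in\partial\Gamma$ be a point achieving $d(x,K)$, set $d_x:=d(x,K)$ and $\widetilde W(x,r):=V_{\widehat\Gamma}(x,r)/V_{\partial\Gamma}(v_x,r)$. Then there is a constant $C$ such that \[\psi_K(x)\le\sum_{n\ge d_x^2}\frac{C}{\widetilde W(x,\sqrt n)}\qquad\text{for all }x\in\Gamma\setminus\partial_I\Gamma.\]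
   Context: $\widehat{\Gamma}=(\widehat V,\widehat E)$ is an infinite simple connected graph with symmetric edge weights $\mu_{xy}=\mu_{yx}$, $\mu_{xy}\ne0$ iff $x\sim y$, vertex weights $\pi>0$ with $\sum_{y\sim x}\mu_{xy}\le\pi(x)$; Markov kernel $\mathcal{K}(x,y)=\mu_{xy}/\pi(x)$ ($x\neq y$), $\mathcal{K}(x,x)=1-\sum_{z\sim x}\mu_{xz}/\pi(x)$. Controlled weights: $\exists C_c>1$ with $\mu_{xy}/\pi(x)\ge1/C_c$ for all $y\sim x$. Uniformly lazy: $\exists C_e\in(0,1)$ with $\mathcal{K}(x,x)\ge C_e$. $d$ is graph distance, $B_{\widehat\Gamma}(x,r)=\{y:d(x,y)\le r\}$, $V_{\widehat\Gamma}(x,r)=\pi(B_{\widehat\Gamma}(x,r))$. Heat kernel $p(n,x,y)=\mathcal{K}^n(x,y)/\pi(y)$; Harnack graph means two-sided Gaussian bounds $\frac{c_1}{V(x,\sqrt n)}e^{-d(x,y)^2/(c_2n)}\le p(n,x,y)\le\frac{c_3}{V(x,\sqrt n)}e^{-d(x,y)^2/(c_4 n)}$ for all $x,y$, $n\ge d(x,y)$. $\Gamma$ is the induced subgraph on $\widehat V\setminus K$; $\partial\Gamma$ = vertices outside $\Gamma$ adjacent to $\Gamma$; $\partial_I\Gamma$ = vertices of $\Gamma$ adjacent to a vertex outside $\Gamma$. $\psi_K(x)=\mathbb{P}^x(\tau_K<\infty)$, $\tau_K=\min\{n\ge0:X_n\in K\}$. *)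

theory Defs
  imports "HOL-Analysis.Analysis" "HOL-Library.Extended_Nonnegative_Real"
begin

text \<open>Weighted graphs: the vertex set is the whole type 'v, adjacency is a
  predicate E (symmetric, irreflexive), edge weights mu, vertex weights pi.\<close>

definition nbrs :: "('v \<Rightarrow> 'v \<Rightarrow> bool) \<Rightarrow> 'v \<Rightarrow> 'v set" where
  "nbrs E x = {y. E x y}"

definition gdist :: "('v \<Rightarrow> 'v \<Rightarrow> bool) \<Rightarrow> 'v \<Rightarrow> 'v \<Rightarrow> nat" where
  "gdist E x y = (LEAST n. (E ^^ n) x y)"

definition gball :: "('v \<Rightarrow> 'v \<Rightarrow> bool) \<Rightarrow> 'v \<Rightarrow> real \<Rightarrow> 'v set" where
  "gball E x r = {y. real (gdist E x y) \<le> r}"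

definition gvol :: "('v \<Rightarrow> 'v \<Rightarrow> bool) \<Rightarrow> ('v \<Rightarrow> real) \<Rightarrow> 'v \<Rightarrow> real \<Rightarrow> real" where
  "gvol E \<pi> x r = sum \<pi> (gball E x r)"

text \<open>Outer boundary of Gamma = V minus K: vertices of K adjacent to a vertex outside K.\<close>
definition outer_bdry :: "('v \<Rightarrow> 'v \<Rightarrow> bool) \<Rightarrow> 'v set \<Rightarrow> 'v set" where
  "outer_bdry E K = {y \<in> K. \<exists>x. x \<notin> K \<and> E x y}"

text \<open>Inner boundary: vertices of Gamma adjacent to a vertex of K.\<close>
definition inner_bdry :: "('v \<Rightarrow> 'v \<Rightarrow> bool) \<Rightarrow> 'v set \<Rightarrow> 'v set" where
  "inner_bdry E K = {x. x \<notin> K \<and> (\<exists>y\<in>K. E x y)}"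

definition bdry_vol :: "('v \<Rightarrow> 'v \<Rightarrow> bool) \<Rightarrow> ('v \<Rightarrow> real) \<Rightarrow> 'v set \<Rightarrow> 'v \<Rightarrow> real \<Rightarrow> real" where
  "bdry_vol E \<pi> K x r = sum \<pi> (gball E x r \<inter> outer_bdry E K)"

definition dist_to_set :: "('v \<Rightarrow> 'v \<Rightarrow> bool) \<Rightarrow> 'v \<Rightarrow> 'v set \<Rightarrow> nat" where
  "dist_to_set E x K = Inf (gdist E x ` K)"

definition mkernel :: "('v \<Rightarrow> 'v \<Rightarrow> bool) \<Rightarrow> ('v \<Rightarrow> 'v \<Rightarrow> real) \<Rightarrow> ('v \<Rightarrow> real) \<Rightarrow> 'v \<Rightarrow> 'v \<Rightarrow> real" where
  "mkernel E \<mu> \<pi> x y =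
     (if x = y then 1 - (\<Sum>z\<in>nbrs E x. \<mu> x z / \<pi> x) else \<mu> x y / \<pi> x)"

fun kpow :: "('v \<Rightarrow> 'v \<Rightarrow> bool) \<Rightarrow> ('v \<Rightarrow> 'v \<Rightarrow> real) \<Rightarrow> ('v \<Rightarrow> real) \<Rightarrow> nat \<Rightarrow> 'v \<Rightarrow> 'v \<Rightarrow> real" where
  "kpow E \<mu> \<pi> 0 x y = (if x = y then 1 else 0)"
| "kpow E \<mu> \<pi> (Suc n) x y =
     (\<Sum>z\<in>insert x (nbrs E x). mkernel E \<mu> \<pi> x z * kpow E \<mu> \<pi> n z y)"

definition heat_kernel :: "('v \<Rightarrow> 'v \<Rightarrow> bool) \<Rightarrow> ('v \<Rightarrow> 'v \<Rightarrow> real) \<Rightarrow> ('v \<Rightarrow> real) \<Rightarrow> nat \<Rightarrow> 'v \<Rightarrow> 'v \<Rightarrow> real" where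
  "heat_kernel E \<mu> \<pi> n x y = kpow E \<mu> \<pi> n x y / \<pi> y"

text \<open>Harnack graph: two-sided Gaussian heat kernel bounds for n \<ge> d(x,y).\<close>
definition harnack_graph :: "('v \<Rightarrow> 'v \<Rightarrow> bool) \<Rightarrow> ('v \<Rightarrow> 'v \<Rightarrow> real) \<Rightarrow> ('v \<Rightarrow> real) \<Rightarrow> bool" where
  "harnack_graph E \<mu> \<pi> \<longleftrightarrow> (\<exists>c1 c2 c3 c4. c1 > 0 \<and> c2 > 0 \<and> c3 > 0 \<and> c4 > 0 \<and>
     (\<forall>x y n. gdist E x y \<le> n \<longrightarrow>
        c1 / gvol E \<pi> x (sqrt (real n)) * exp (- (real (gdist E x y))\<^sup>2 / (c2 * real n))
          \<le> heat_kernel E \<mu> \<pi> n x y \<and>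
        heat_kernel E \<mu> \<pi> n x y
          \<le> c3 / gvol E \<pi> x (sqrt (real n)) * exp (- (real (gdist E x y))\<^sup>2 / (c4 * real n))))"

text \<open>P^x(tau_K \<le> n), where tau_K = min{n \<ge> 0. X_n \<in> K}, for the chain with kernel mkernel.\<close>
fun hit_le :: "('v \<Rightarrow> 'v \<Rightarrow> bool) \<Rightarrow> ('v \<Rightarrow> 'v \<Rightarrow> real) \<Rightarrow> ('v \<Rightarrow> real) \<Rightarrow> 'v set \<Rightarrow> nat \<Rightarrow> 'v \<Rightarrow> real" where
  "hit_le E \<mu> \<pi> K 0 x = (if x \<in> K then 1 else 0)"
| "hit_le E \<mu> \<pi> K (Suc n) x =
     (if x \<in> K then 1 else (\<Sum>z\<in>insert x (nbrs E x). mkernel E \<mu> \<pi> x z * hit_le E \<mu> \<pi> K n z))"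

text \<open>psi_K(x) = P^x(tau_K < infinity) = sup_n P^x(tau_K \<le> n).\<close>
definition hit_prob :: "('v \<Rightarrow> 'v \<Rightarrow> bool) \<Rightarrow> ('v \<Rightarrow> 'v \<Rightarrow> real) \<Rightarrow> ('v \<Rightarrow> real) \<Rightarrow> 'v set \<Rightarrow> 'v \<Rightarrow> real" where
  "hit_prob E \<mu> \<pi> K x = (SUP n. hit_le E \<mu> \<pi> K n x)"

end

theory Submission
  imports Defs
begin

fun qv :: "('v \<Rightarrow> 'v \<Rightarrow> bool) \<Rightarrow> ('v \<Rightarrow> 'v \<Rightarrow> real) \<Rightarrow> ('v \<Rightarrow> real) \<Rightarrow> 'v set \<Rightarrow> nat \<Rightarrow> 'v \<Rightarrow> real" where
  "qv E \<mu> \<pi> A 0 x = (if x \<in> A then 1 else 0)"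
| "qv E \<mu> \<pi> A (Suc n) x = (\<Sum>z\<in>insert x (nbrs E x). mkernel E \<mu> \<pi> x z * qv E \<mu> \<pi> A n z)"

locale G =
  fixes E :: "'v \<Rightarrow> 'v \<Rightarrow> bool"
  assumes sym: "\<And>x y. E x y \<longleftrightarrow> E y x"
    and connected: "\<And>x y. \<exists>n. (E ^^ n) x y"
    and loc_finite: "\<And>x. finite (nbrs E x)"
begin

abbreviation "g \<equiv> gdist E"

lemma walk_g: "(E ^^ g x y) x y"
  unfolding gdist_def using connected by (rule LeastI_ex)

lemma g_le: "(E ^^ n) x y \<Longrightarrow> g x y \<le> n"
  unfolding gdist_def by (rule Least_le)

lemma g_refl[simp]: "g x x = 0"
  using g_le[of 0 x x] by simp

lemma g_zero: "g x y = 0 \<longleftrightarrow> x = y"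
  using walk_g[of x y] by (auto elim: relpowp_0_E)

lemma g_tri: "g x z \<le> g x y + g y z"
  using relpowp_trans[OF walk_g[of x y] walk_g[of y z]] by (rule g_le)

lemma walk_sym: "(E ^^ n) x y \<Longrightarrow> (E ^^ n) y x"
proof (induction n arbitrary: x y)
  case 0 then show ?case by (auto elim: relpowp_0_E)
next
  case (Suc n)
  from Suc.prems obtain w where "(E ^^ n) x w" "E w y" by (auto elim: relpowp_Suc_E)
  then show ?case using Suc.IH sym by (meson relpowp_Suc_I2)
qed

lemma g_sym: "g x y = g y x"
  using g_le[OF walk_sym[OF walk_g[of x y]]] g_le[OF walk_sym[OF walk_g[of y x]]] by simp

lemma g_edge: "E x y \<Longrightarrow> g x y \<le> 1"
  using g_le[OF relpowp_Suc_I[OF relpowp_0_I]] by simp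

lemma finite_walks: "finite {y. (E ^^ n) x y}"
proof (induction n)
  case 0 then show ?case by (simp add: relpowp_0_E)
next
  case (Suc n)
  have "{y. (E ^^ Suc n) x y} \<subseteq> (\<Union>w\<in>{y. (E ^^ n) x y}. nbrs E w)"
    by (auto simp: nbrs_def elim: relpowp_Suc_E)
  moreover have "finite (\<Union>w\<in>{y. (E ^^ n) x y}. nbrs E w)"
    using Suc loc_finite by blast
  ultimately show ?case by (rule finite_subset)
qed

lemma finite_ball: "finite (gball E x r)"
proof -
  have "gball E x r \<subseteq> (\<Union>n\<in>{..nat \<lfloor>r\<rfloor>}. {y. (E ^^ n) x y})"
  proof
    fix y assume "y \<in> gball E x r"
    then have "real (g x y) \<le> r" by (simp add: gball_def)
    then have "g x y \<le> nat \<lfloor>r\<rfloor>" by linarith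
    then show "y \<in> (\<Union>n\<in>{..nat \<lfloor>r\<rfloor>}. {y. (E ^^ n) x y})" using walk_g[of x y] by auto
  qed
  then show ?thesis by (rule finite_subset) (auto intro: finite_walks)
qed

lemma ball_mono: "r \<le> R \<Longrightarrow> gball E x r \<subseteq> gball E x R"
  by (auto simp: gball_def)

lemma in_ball[simp]: "y \<in> gball E x r \<longleftrightarrow> real (g x y) \<le> r"
  by (simp add: gball_def)

end

locale GK = G E for E :: "'v \<Rightarrow> 'v \<Rightarrow> bool" +
  fixes \<mu> :: "'v \<Rightarrow> 'v \<Rightarrow> real" and \<pi> :: "'v \<Rightarrow> real"
  assumes mu_sym: "\<And>x y. \<mu> x y = \<mu> y x"
    and mu_edge: "\<And>x y. \<mu> x y \<noteq> 0 \<longleftrightarrow> E x y"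
    and pi_pos: "\<And>x. \<pi> x > 0"
    and pi_ge: "\<And>x. (\<Sum>y\<in>nbrs E x. \<mu> x y) \<le> \<pi> x"
    and controlled: "\<exists>Cc>1. \<forall>x y. E x y \<longrightarrow> \<mu> x y / \<pi> x \<ge> 1 / Cc"
begin

abbreviation "k \<equiv> mkernel E \<mu> \<pi>"
abbreviation "kp \<equiv> kpow E \<mu> \<pi>"
abbreviation "N x \<equiv> insert x (nbrs E x)"

lemma N_ball: "N x \<subseteq> gball E x 1"
  using g_edge by (auto simp: nbrs_def)

lemma finite_N: "finite (N x)" using loc_finite by simp

lemma k_nonneg: "k x y \<ge> 0"
proof (cases "x = y")
  case True
  have "(\<Sum>z\<in>nbrs E x. \<mu> x z / \<pi> x) = (\<Sum>z\<in>nbrs E x. \<mu> x z) / \<pi> x"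
    by (simp add: sum_divide_distrib)
  also have "\<dots> \<le> 1" using pi_ge[of x] pi_pos[of x] by simp
  finally show ?thesis using True by (simp add: mkernel_def)
next
  case False
  obtain Cc where Cc: "Cc > 1" "\<forall>x y. E x y \<longrightarrow> \<mu> x y / \<pi> x \<ge> 1 / Cc" using controlled by blast
  show ?thesis
  proof (cases "E x y")
    case True then have "\<mu> x y / \<pi> x \<ge> 1 / Cc" using Cc by blast
    moreover have "1 / Cc > 0" using Cc by simp
    ultimately have "\<mu> x y / \<pi> x > 0" by linarith
    then show ?thesis using False by (simp add: mkernel_def)
  next
    case F2: False then have "\<mu> x y = 0" using mu_edge by blast
    then show ?thesis using False by (simp add: mkernel_def)
  qed
qed

lemma k_zero: "y \<notin> N x \<Longrightarrow> k x y = 0"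
  using mu_edge[of x y] by (auto simp: mkernel_def nbrs_def)

lemma k_zero': "x \<notin> N y \<Longrightarrow> k x y = 0"
  using k_zero[of y x] sym[of x y] by (auto simp: nbrs_def)

lemma k_rev: "\<pi> x * k x y = \<pi> y * k y x"
  using pi_pos[of x] pi_pos[of y] mu_sym[of x y] by (auto simp: mkernel_def)

lemma kp_step: "finite F \<Longrightarrow> N x \<subseteq> F \<Longrightarrow> kp (Suc n) x y = (\<Sum>z\<in>F. k x z * kp n z y)"
  by (simp, rule sum.mono_neutral_left) (auto simp: k_zero)

lemma kp_nonneg: "kp n x y \<ge> 0"
  by (induction n arbitrary: x) (auto intro!: sum_nonneg mult_nonneg_nonneg k_nonneg)

lemma kp_supp: "kp n x y \<noteq> 0 \<Longrightarrow> g x y \<le> n"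
proof (induction n arbitrary: x)
  case 0 then show ?case by (auto split: if_splits)
next
  case (Suc n)
  from Suc.prems have "(\<Sum>z\<in>N x. k x z * kp n z y) \<noteq> 0" by simp
  then obtain z where z: "z \<in> N x" "k x z * kp n z y \<noteq> 0"
    by (rule sum.not_neutral_contains_not_neutral)
  then have z: "z \<in> N x" "kp n z y \<noteq> 0" by auto
  then have "g z y \<le> n" using Suc.IH by blast
  moreover have "g x z \<le> 1" using z(1) g_edge by (auto simp: nbrs_def)
  ultimately show ?case using g_tri[of x y z] g_tri[of x z y] by linarith
qed

lemma kp_zero: "real n < real (g x y) \<Longrightarrow> kp n x y = 0"
  using kp_supp[of n x y] by linarith

lemma CK: "finite F \<Longrightarrow> gball E x (real a) \<subseteq> F \<Longrightarrow>
   kp (a + b) x y = (\<Sum>w\<in>F. kp a x w * kp b w y)"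
proof (induction a arbitrary: x)
  case 0
  have "x \<in> F" using 0 by auto
  have "(\<Sum>w\<in>F. kp 0 x w * kp b w y) = (\<Sum>w\<in>F. if w = x then kp b w y else 0)"
    by (rule sum.cong) auto
  then show ?case using 0 \<open>x \<in> F\<close> by (simp add: sum.delta')
next
  case (Suc a)
  have sub: "gball E z (real a) \<subseteq> F" if "z \<in> N x" for z
  proof
    fix w assume "w \<in> gball E z (real a)"
    moreover have "g x z \<le> 1" using that g_edge by (auto simp: nbrs_def)
    ultimately have "real (g x w) \<le> real (Suc a)" using g_tri[of x w z] g_tri[of x z w] by simp
    then show "w \<in> F" using Suc.prems by auto
  qed
  have "kp (Suc a + b) x y = (\<Sum>z\<in>N x. k x z * kp (a + b) z y)" by simp
  also have "\<dots> = (\<Sum>z\<in>N x. k x z * (\<Sum>w\<in>F. kp a z w * kp b w y))"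
    using Suc.IH[OF Suc.prems(1) sub] by simp
  also have "\<dots> = (\<Sum>w\<in>F. (\<Sum>z\<in>N x. k x z * kp a z w) * kp b w y)"
    by (simp add: sum_distrib_left sum_distrib_right sum.swap[of _ "N x"] mult.assoc)
  also have "\<dots> = (\<Sum>w\<in>F. kp (Suc a) x w * kp b w y)" by simp
  finally show ?case .
qed


lemma kp1: "kp 1 w x = k w x"
proof -
  have "kp 1 w x = (\<Sum>z\<in>N w. if z = x then k w z else 0)"
    by (simp, rule sum.cong) auto
  also have "\<dots> = k w x" using finite_N[of w] by (auto simp: sum.delta' k_zero)
  finally show ?thesis .
qed

lemma kp_rev: "\<pi> x * kp n x y = \<pi> y * kp n y x"
proof (induction n arbitrary: x y)
  case 0 then show ?case by simp
next
  case (Suc n)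
  define F where "F = gball E y (real n) \<union> N x"
  have fF: "finite F" unfolding F_def using finite_ball finite_N by (simp del: insert_iff)
  have "\<pi> x * kp (Suc n) x y = (\<Sum>z\<in>N x. \<pi> x * k x z * kp n z y)"
    by (simp add: sum_distrib_left mult.assoc)
  also have "\<dots> = (\<Sum>z\<in>N x. k z x * (\<pi> z * kp n z y))"
    by (rule sum.cong) (auto simp: k_rev)
  also have "\<dots> = (\<Sum>z\<in>N x. k z x * (\<pi> y * kp n y z))" using Suc.IH by simp
  also have "\<dots> = (\<Sum>z\<in>N x. \<pi> y * (kp n y z * k z x))"
    by (rule sum.cong) auto
  also have "\<dots> = (\<Sum>z\<in>F. \<pi> y * (kp n y z * k z x))"
    by (rule sum.mono_neutral_left) (auto simp: F_def k_zero' finite_ball loc_finite)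
  also have "\<dots> = \<pi> y * (\<Sum>z\<in>F. kp n y z * kp 1 z x)"
    by (simp only: kp1 sum_distrib_left)
  also have "(\<Sum>z\<in>F. kp n y z * kp 1 z x) = kp (n + 1) y x"
    by (rule CK[symmetric]) (auto simp: F_def finite_ball loc_finite)
  finally show ?case by simp
qed

lemma qv_nonneg: "qv E \<mu> \<pi> A n x \<ge> 0"
  by (induction n arbitrary: x) (auto intro!: sum_nonneg mult_nonneg_nonneg k_nonneg)

lemma qv_eq: "finite F \<Longrightarrow> gball E x (real a) \<subseteq> F \<Longrightarrow>
   qv E \<mu> \<pi> A a x = (\<Sum>w\<in>A \<inter> F. kp a x w)"
proof (induction a arbitrary: x)
  case 0
  have "x \<in> F" using 0 by auto
  have "(\<Sum>w\<in>A \<inter> F. kp 0 x w) = (\<Sum>w\<in>A \<inter> F. if w = x then 1 else 0)"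
    by (rule sum.cong) auto
  then show ?case using 0 \<open>x \<in> F\<close> by (simp add: sum.delta')
next
  case (Suc a)
  have sub: "gball E z (real a) \<subseteq> F" if "z \<in> N x" for z
  proof
    fix w assume "w \<in> gball E z (real a)"
    moreover have "g x z \<le> 1" using that g_edge by (auto simp: nbrs_def)
    ultimately have "real (g x w) \<le> real (Suc a)" using g_tri[of x w z] g_tri[of x z w] by simp
    then show "w \<in> F" using Suc.prems by auto
  qed
  have "qv E \<mu> \<pi> A (Suc a) x = (\<Sum>z\<in>N x. k x z * qv E \<mu> \<pi> A a z)" by simp
  also have "\<dots> = (\<Sum>z\<in>N x. k x z * (\<Sum>w\<in>A \<inter> F. kp a z w))"
    using Suc.IH[OF Suc.prems(1) sub] by simp
  also have "\<dots> = (\<Sum>w\<in>A \<inter> F. (\<Sum>z\<in>N x. k x z * kp a z w))"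
    by (simp add: sum_distrib_left sum.swap[of _ "N x"])
  also have "\<dots> = (\<Sum>w\<in>A \<inter> F. kp (Suc a) x w)" by simp
  finally show ?case .
qed

lemma hit_bound:
  assumes "x \<notin> K \<or> x \<in> outer_bdry E K"
  shows "hit_le E \<mu> \<pi> K n x \<le> (\<Sum>m\<le>n. qv E \<mu> \<pi> (outer_bdry E K) m x)"
  using assms
proof (induction n arbitrary: x)
  case 0
  then show ?case by (auto simp: outer_bdry_def)
next
  case (Suc n)
  let ?A = "outer_bdry E K"
  show ?case
  proof (cases "x \<in> K")
    case True
    then have "x \<in> ?A" using Suc.prems by blast
    then have "hit_le E \<mu> \<pi> K (Suc n) x = qv E \<mu> \<pi> ?A 0 x" using True by simp
    also have "\<dots> \<le> (\<Sum>m\<le>Suc n. qv E \<mu> \<pi> ?A m x)"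
      by (rule member_le_sum) (auto intro: qv_nonneg)
    finally show ?thesis .
  next
    case False
    have "hit_le E \<mu> \<pi> K (Suc n) x = (\<Sum>z\<in>N x. k x z * hit_le E \<mu> \<pi> K n z)"
      using False by simp
    also have "\<dots> \<le> (\<Sum>z\<in>N x. k x z * (\<Sum>m\<le>n. qv E \<mu> \<pi> ?A m z))"
    proof (rule sum_mono, rule mult_left_mono)
      fix z assume z: "z \<in> N x"
      then have "z \<notin> K \<or> z \<in> ?A" using False by (auto simp: outer_bdry_def nbrs_def)
      then show "hit_le E \<mu> \<pi> K n z \<le> (\<Sum>m\<le>n. qv E \<mu> \<pi> ?A m z)" by (rule Suc.IH)
    qed (rule k_nonneg)
    also have "\<dots> = (\<Sum>m\<le>n. qv E \<mu> \<pi> ?A (Suc m) x)"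
      by (simp add: sum_distrib_left sum.swap[of _ "N x"])
    also have "\<dots> \<le> (\<Sum>m\<le>Suc n. qv E \<mu> \<pi> ?A m x)"
    proof -
      have "(\<Sum>m\<le>n. qv E \<mu> \<pi> ?A (Suc m) x) = (\<Sum>m\<in>Suc ` {..n}. qv E \<mu> \<pi> ?A m x)"
        by (simp add: sum.reindex)
      also have "\<dots> \<le> (\<Sum>m\<le>Suc n. qv E \<mu> \<pi> ?A m x)"
        by (rule sum_mono2) (auto intro: qv_nonneg)
      finally show ?thesis .
    qed
    finally show ?thesis .
  qed
qed

end

locale GH = GK E \<mu> \<pi> for E :: "'v \<Rightarrow> 'v \<Rightarrow> bool" and \<mu> \<pi> +
  fixes c1 c2 c3 c4 :: real
  assumes cpos: "c1 > 0" "c2 > 0" "c3 > 0" "c4 > 0"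
  and hlow: "\<And>x y n. g x y \<le> n \<Longrightarrow> c1 / gvol E \<pi> x (sqrt (real n)) * exp (- (real (g x y))\<^sup>2 / (c2 * real n))
          \<le> heat_kernel E \<mu> \<pi> n x y"
  and hup: "\<And>x y n. g x y \<le> n \<Longrightarrow> heat_kernel E \<mu> \<pi> n x y
          \<le> c3 / gvol E \<pi> x (sqrt (real n)) * exp (- (real (g x y))\<^sup>2 / (c4 * real n))"
begin

abbreviation "V \<equiv> gvol E \<pi>"

lemma V_pos: "r \<ge> 0 \<Longrightarrow> V x r > 0"
  unfolding gvol_def
  by (rule sum_pos2[of _ x]) (auto simp: finite_ball pi_pos less_imp_le)

lemma V_mono: "r \<le> R \<Longrightarrow> V x r \<le> V x R"
  unfolding gvol_def
  by (rule sum_mono2) (auto simp: finite_ball pi_pos less_imp_le)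

lemma kp_upper:
  assumes "g x z \<le> m"
  shows "kp m x z \<le> \<pi> z * (c3 / V x (sqrt (real m)) * exp (- (real (g x z))\<^sup>2 / (c4 * real m)))"
proof -
  have "kp m x z = \<pi> z * heat_kernel E \<mu> \<pi> m x z"
    using pi_pos[of z] by (simp add: heat_kernel_def)
  also have "\<dots> \<le> \<pi> z * (c3 / V x (sqrt (real m)) * exp (- (real (g x z))\<^sup>2 / (c4 * real m)))"
    by (rule mult_left_mono[OF hup[OF assms]]) (simp add: pi_pos less_imp_le)
  finally show ?thesis .
qed

definition "aa = c1 * exp (- 1 / c2)"
definition "CV = c3 / aa\<^sup>2"

lemma aa_pos: "aa > 0" using cpos by (simp add: aa_def)

lemma V_doub:
  assumes n: "n \<ge> 1"
  shows "V x (sqrt (real (2 * n))) \<le> CV * V x (sqrt (real n))"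
proof -
  let ?B = "gball E x (real n)"
  let ?b = "gball E x (sqrt (real n))"
  let ?W = "V x (sqrt (real n))"
  have Wpos: "?W > 0" by (rule V_pos) simp
  have sub: "?b \<subseteq> ?B"
  proof (rule ball_mono)
    have "1 \<le> sqrt (real n)" using n by simp
    then have "sqrt (real n) * 1 \<le> sqrt (real n) * sqrt (real n)" by (intro mult_left_mono) auto
    then show "sqrt (real n) \<le> real n" by simp
  qed
  have lowp: "kp n x w \<ge> \<pi> w * (aa / ?W)" if w: "w \<in> ?b" for w
  proof -
    have gw: "real (g x w) \<le> sqrt (real n)" using w by simp
    then have gw2: "(real (g x w))\<^sup>2 \<le> real n"
      using power_mono[OF gw, of 2] by simp
    have "real (g x w) \<le> real n" using w sub by auto
    then have gn: "g x w \<le> n" by simp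
    have "(real (g x w))\<^sup>2 / (c2 * real n) \<le> real n / (c2 * real n)"
      by (rule divide_right_mono) (use gw2 cpos in auto)
    also have "\<dots> = 1 / c2" using n by simp
    finally have "exp (- 1 / c2) \<le> exp (- (real (g x w))\<^sup>2 / (c2 * real n))" by simp
    then have "aa / ?W \<le> c1 / ?W * exp (- (real (g x w))\<^sup>2 / (c2 * real n))"
      unfolding aa_def using cpos Wpos by (simp add: divide_right_mono mult_left_mono)
    also have "\<dots> \<le> heat_kernel E \<mu> \<pi> n x w" by (rule hlow[OF gn])
    finally have "aa / ?W \<le> kp n x w / \<pi> w" by (simp add: heat_kernel_def)
    then show ?thesis using pi_pos[of w] by (simp add: field_simps)
  qed
  have "kp (n + n) x x = (\<Sum>w\<in>?B. kp n x w * kp n w x)"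
    by (rule CK) (auto simp: finite_ball)
  also have "\<dots> = (\<Sum>w\<in>?B. \<pi> x * ((kp n x w)\<^sup>2 / \<pi> w))"
  proof (rule sum.cong)
    fix w
    have "kp n w x = \<pi> x * kp n x w / \<pi> w" using kp_rev[of w n x] pi_pos[of w]
      by (simp add: field_simps)
    then show "kp n x w * kp n w x = \<pi> x * ((kp n x w)\<^sup>2 / \<pi> w)"
      by (simp add: power2_eq_square)
  qed simp
  also have "\<dots> \<ge> (\<Sum>w\<in>?b. \<pi> x * ((kp n x w)\<^sup>2 / \<pi> w))"
    by (rule sum_mono2[OF finite_ball sub]) (auto intro!: mult_nonneg_nonneg divide_nonneg_nonneg simp: pi_pos less_imp_le)
  also have "(\<Sum>w\<in>?b. \<pi> x * ((kp n x w)\<^sup>2 / \<pi> w)) \<ge> (\<Sum>w\<in>?b. \<pi> x * (\<pi> w * (aa / ?W)\<^sup>2))"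
  proof (rule sum_mono, rule mult_left_mono)
    fix w assume w: "w \<in> ?b"
    have "(\<pi> w * (aa / ?W))\<^sup>2 \<le> (kp n x w)\<^sup>2"
      by (rule power_mono[OF lowp[OF w]]) (use aa_pos Wpos pi_pos[of w] in simp)
    then have "(\<pi> w * (aa / ?W))\<^sup>2 / \<pi> w \<le> (kp n x w)\<^sup>2 / \<pi> w"
      using pi_pos[of w] by (simp add: divide_right_mono)
    moreover have "(\<pi> w * (aa / ?W))\<^sup>2 / \<pi> w = \<pi> w * (aa / ?W)\<^sup>2"
      using pi_pos[of w] by (simp add: power_mult_distrib power2_eq_square)
    ultimately show "\<pi> w * (aa / ?W)\<^sup>2 \<le> (kp n x w)\<^sup>2 / \<pi> w" by simp
  qed (simp add: pi_pos less_imp_le)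
  also have "(\<Sum>w\<in>?b. \<pi> x * (\<pi> w * (aa / ?W)\<^sup>2)) = \<pi> x * aa\<^sup>2 / ?W"
  proof -
    have "(\<Sum>w\<in>?b. \<pi> x * (\<pi> w * (aa / ?W)\<^sup>2)) = (\<Sum>w\<in>?b. \<pi> w * (\<pi> x * (aa / ?W)\<^sup>2))"
      by (rule sum.cong[OF refl mult.left_commute])
    also have "\<dots> = (\<Sum>w\<in>?b. \<pi> w) * (\<pi> x * (aa / ?W)\<^sup>2)"
      by (rule sum_distrib_right[symmetric])
    also have "(\<Sum>w\<in>?b. \<pi> w) = ?W" by (simp add: gvol_def)
    also have "?W * (\<pi> x * (aa / ?W)\<^sup>2) = \<pi> x * aa\<^sup>2 / ?W"
      using Wpos by (simp add: power2_eq_square)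
    finally show ?thesis .
  qed
  finally have low: "\<pi> x * (aa\<^sup>2 / ?W) \<le> kp (n + n) x x" by simp
  have "kp (2 * n) x x \<le> \<pi> x * (c3 / V x (sqrt (real (2 * n))) * exp (- (real (g x x))\<^sup>2 / (c4 * real (2 * n))))"
    by (rule kp_upper) simp
  moreover have "2 * n = n + n" by simp
  ultimately have up: "kp (n + n) x x \<le> \<pi> x * (c3 / V x (sqrt (real (2 * n))))" by simp
  from low up have "\<pi> x * (aa\<^sup>2 / ?W) \<le> \<pi> x * (c3 / V x (sqrt (real (2 * n))))" by linarith
  then have h: "aa\<^sup>2 / ?W \<le> c3 / V x (sqrt (real (2 * n)))" using pi_pos[of x]
    by (simp only: mult_le_cancel_left_pos)
  have V2: "V x (sqrt (real (2 * n))) > 0" by (rule V_pos) simp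
  from h have "aa\<^sup>2 * V x (sqrt (real (2 * n))) \<le> c3 * ?W"
    using V2 Wpos by (simp add: divide_le_eq le_divide_eq mult_ac)
  then have "V x (sqrt (real (2 * n))) \<le> c3 * ?W / aa\<^sup>2"
    using aa_pos by (simp add: le_divide_eq mult_ac)
  then show ?thesis unfolding CV_def by simp
qed


definition "CV' = max CV 1"

lemma V_doub_iter:
  assumes m: "m \<ge> 1"
  shows "V x (sqrt (real (2^j * m))) \<le> CV' ^ j * V x (sqrt (real m))"
proof (induction j)
  case 0 then show ?case by simp
next
  case (Suc j)
  have "1 \<le> 2^j * m" using m by (simp add: Suc_le_eq)
  then have "V x (sqrt (real (2 * (2^j * m)))) \<le> CV * V x (sqrt (real (2^j * m)))" by (rule V_doub)
  also have "\<dots> \<le> CV' * V x (sqrt (real (2^j * m)))"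
    by (rule mult_right_mono) (auto simp: CV'_def less_imp_le V_pos)
  also have "\<dots> \<le> CV' * (CV' ^ j * V x (sqrt (real m)))"
    by (rule mult_left_mono[OF Suc.IH]) (simp add: CV'_def)
  finally show ?case by (simp add: mult_ac)
qed

lemma V_far:
  assumes N: "CV' \<le> 2 ^ Nn" and m: "1 \<le> m" "m < d\<^sup>2"
  shows "V x (2 * real d) \<le> (8 * real d ^ 2 / real m) ^ Nn * V x (sqrt (real m))"
proof -
  define j where "j = (LEAST j. 4 * d\<^sup>2 \<le> 2^j * m)"
  have ex: "4 * d\<^sup>2 \<le> 2^(4 * d\<^sup>2) * m"
  proof -
    have "4 * d\<^sup>2 \<le> 2^(4 * d\<^sup>2)" using less_exp[of "4 * d\<^sup>2"] by simp
    also have "\<dots> \<le> 2^(4 * d\<^sup>2) * m" using m by simp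
    finally show ?thesis .
  qed
  have j1: "4 * d\<^sup>2 \<le> 2^j * m" unfolding j_def using ex by (rule LeastI)
  have j0: "j \<noteq> 0" using j1 m by (intro notI) simp
  have j2: "\<not> 4 * d\<^sup>2 \<le> 2^(j - 1) * m" unfolding j_def
    by (rule not_less_Least) (use j0 j_def in simp)
  then have "2 * (2^(j - 1) * m) < 8 * d\<^sup>2" by (simp add: not_le mult.commute)
  moreover have "2 * 2^(j - 1) = (2::nat)^j" using j0 by (metis power_eq_if)
  ultimately have j3: "2^j * m < 8 * d\<^sup>2" by (metis mult.assoc)
  have mpos: "real m > 0" using m by simp
  have "2 * real d = sqrt (real (4 * d\<^sup>2))" by (simp add: real_sqrt_mult)
  also have "\<dots> \<le> sqrt (real (2^j * m))" using j1 by (simp only: real_sqrt_le_iff of_nat_le_iff)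
  finally have "V x (2 * real d) \<le> V x (sqrt (real (2^j * m)))" by (rule V_mono)
  also have "\<dots> \<le> CV' ^ j * V x (sqrt (real m))" using m by (intro V_doub_iter) simp
  also have "\<dots> \<le> (2 ^ Nn) ^ j * V x (sqrt (real m))"
    by (intro mult_right_mono power_mono N) (auto simp: CV'_def less_imp_le V_pos)
  also have "(2 ^ Nn) ^ j = ((2::real) ^ j) ^ Nn" by (simp add: power_mult[symmetric] mult.commute)
  also have "((2::real) ^ j) ^ Nn * V x (sqrt (real m)) \<le> (8 * real d ^ 2 / real m) ^ Nn * V x (sqrt (real m))"
  proof (intro mult_right_mono power_mono)
    have "real (2^j * m) < real (8 * d\<^sup>2)" using j3 by linarith
    then have "(2::real)^j * real m < 8 * real d ^ 2" by simp
    then show "(2::real) ^ j \<le> 8 * real d ^ 2 / real m" using mpos by (simp add: le_divide_eq)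
  qed (auto simp: less_imp_le V_pos)
  finally show ?thesis .
qed

end

lemma exp_pow_bound:
  fixes y :: real
  assumes "y \<ge> 0" "Nn \<ge> 1"
  shows "y ^ Nn * exp (- y) \<le> real Nn ^ Nn"
proof -
  have "(y / Nn) ^ Nn \<le> exp (y / Nn) ^ Nn"
    by (rule power_mono) (use assms in \<open>auto intro: order_trans[OF _ exp_ge_add_one_self]\<close>)
  also have "exp (y / Nn) ^ Nn = exp y"
    using assms by (simp add: exp_of_nat_mult[symmetric])
  finally have "y ^ Nn / real Nn ^ Nn \<le> exp y" by (simp add: power_divide)
  then have "y ^ Nn \<le> real Nn ^ Nn * exp y" using assms by (simp add: divide_le_eq mult.commute)
  then show ?thesis by (simp add: exp_minus field_simps)
qed

locale GHK = GH E \<mu> \<pi> c1 c2 c3 c4 for E :: "'v \<Rightarrow> 'v \<Rightarrow> bool" and \<mu> \<pi> c1 c2 c3 c4 +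
  fixes K :: "'v set" and D :: real
  assumes D1: "D \<ge> 1"
  and dbl: "\<And>z r. z \<in> outer_bdry E K \<Longrightarrow> r > 0 \<Longrightarrow> bdry_vol E \<pi> K z (2 * r) \<le> D * bdry_vol E \<pi> K z r"
begin

abbreviation "A \<equiv> outer_bdry E K"
abbreviation "Vb \<equiv> bdry_vol E \<pi> K"

lemma Vb_nonneg: "Vb z r \<ge> 0"
  unfolding bdry_vol_def by (rule sum_nonneg) (simp add: pi_pos less_imp_le)

lemma Vb_mono: "r \<le> R \<Longrightarrow> Vb z r \<le> Vb z R"
  unfolding bdry_vol_def
  by (rule sum_mono2) (auto simp: finite_ball pi_pos less_imp_le)

lemma Vb_iter: "z \<in> A \<Longrightarrow> \<rho> > 0 \<Longrightarrow> Vb z (2^i * \<rho>) \<le> D^i * Vb z \<rho>"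
proof (induction i)
  case 0 then show ?case by simp
next
  case (Suc i)
  have "Vb z (2^Suc i * \<rho>) = Vb z (2 * (2^i * \<rho>))" by (simp add: mult.assoc)
  also have "\<dots> \<le> D * Vb z (2^i * \<rho>)" using Suc.prems by (intro dbl) auto
  also have "\<dots> \<le> D * (D^i * Vb z \<rho>)" using Suc D1 by (intro mult_left_mono) auto
  finally show ?case by (simp add: mult.assoc)
qed


lemma term_bound:
  assumes t: "t \<ge> 1" and N1: "Nn \<ge> 1" "2 * D \<le> 4 ^ Nn"
  shows "D^(Suc i) * exp (- ((4::real)^i * t / (4 * c4)))
         \<le> D * (real Nn ^ Nn * (8 * c4) ^ Nn) * (1/2)^i * exp (- t / (8 * c4))"
proof -
  have c4: "c4 > 0" using cpos by simp
  have p4: "(4::real)^i \<ge> 1" by simp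
  have "(4::real)^i / (8 * c4) + t / (8 * c4) \<le> (4::real)^i * t / (4 * c4)"
  proof -
    have "(4::real)^i * 1 \<le> 4^i * t" using t by (intro mult_left_mono) auto
    moreover have "1 * t \<le> (4::real)^i * t" using t p4 by (intro mult_right_mono) auto
    ultimately have "(4::real)^i + t \<le> 2 * (4^i * t)" by linarith
    then have "((4::real)^i + t) / (8 * c4) \<le> 2 * (4^i * t) / (8 * c4)"
      using c4 by (intro divide_right_mono) auto
    then show ?thesis by (simp add: add_divide_distrib mult.commute)
  qed
  then have e1: "exp (- ((4::real)^i * t / (4 * c4))) \<le> exp (- ((4::real)^i / (8 * c4))) * exp (- t / (8 * c4))"
    by (simp add: exp_add[symmetric])
  define y where "y = (4::real)^i / (8 * c4)"
  have y0: "y > 0" using c4 by (simp add: y_def)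
  have "y ^ Nn * exp (- y) \<le> real Nn ^ Nn" using y0 N1 by (intro exp_pow_bound) auto
  then have e2: "exp (- y) \<le> real Nn ^ Nn / y ^ Nn" using y0 by (simp add: le_divide_eq mult.commute)
  have "y ^ Nn = ((4::real)^Nn)^i / (8 * c4)^Nn"
    by (simp add: y_def power_divide power_mult[symmetric] mult.commute)
  then have e3: "real Nn ^ Nn / y ^ Nn = (real Nn ^ Nn * (8 * c4) ^ Nn) / ((4::real)^Nn)^i"
    using c4 by simp
  have "D^i / ((4::real)^Nn)^i = (D / 4^Nn)^i" by (simp add: power_divide)
  also have "\<dots> \<le> (1/2)^i"
    using N1 D1 by (intro power_mono) (auto simp: divide_le_eq)
  finally have e4: "D^i / ((4::real)^Nn)^i \<le> (1/2)^i" .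
  have "D^(Suc i) * exp (- ((4::real)^i * t / (4 * c4)))
        \<le> D^(Suc i) * (exp (- y) * exp (- t / (8 * c4)))"
    using e1 D1 unfolding y_def by (intro mult_left_mono) auto
  also have "\<dots> \<le> D^(Suc i) * ((real Nn ^ Nn * (8 * c4) ^ Nn) / ((4::real)^Nn)^i * exp (- t / (8 * c4)))"
    using e2 e3 D1 by (intro mult_left_mono mult_right_mono) auto
  also have "\<dots> = D * (real Nn ^ Nn * (8 * c4) ^ Nn) * (D^i / ((4::real)^Nn)^i) * exp (- t / (8 * c4))"
    by (simp add: field_simps)
  also have "\<dots> \<le> D * (real Nn ^ Nn * (8 * c4) ^ Nn) * (1/2)^i * exp (- t / (8 * c4))"
    using e4 D1 c4 by (intro mult_right_mono mult_left_mono) auto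
  finally show ?thesis .
qed


lemma key_sum:
  assumes v: "v \<in> A" and gv: "g x v = d" and d1: "d \<ge> 1" and dmin: "\<And>z. z \<in> A \<Longrightarrow> d \<le> g x z"
   and m1: "m \<ge> 1" and N1: "Nn \<ge> 1" "2 * D \<le> 4 ^ Nn"
   and rho: "\<rho> = max (real d) (sqrt (real m))" and tdef: "t = \<rho>\<^sup>2 / real m"
  shows "(\<Sum>z\<in>A \<inter> gball E x (real m). \<pi> z * exp (- (real (g x z))\<^sup>2 / (c4 * real m)))
     \<le> exp (1 / (4 * c4)) * (2 * D * (real Nn ^ Nn * (8 * c4) ^ Nn)) * exp (- t / (8 * c4)) * Vb v \<rho>"
proof -
  let ?S = "A \<inter> gball E x (real m)"
  let ?Q = "real Nn ^ Nn * (8 * c4) ^ Nn"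
  let ?e = "exp (1 / (4 * c4))"
  define w where "w i = ?e * exp (- ((4::real)^i * t / (4 * c4)))" for i :: nat
  have c4: "c4 > 0" using cpos by simp
  have fS: "finite ?S" using finite_ball by blast
  have mpos: "real m > 0" using m1 by simp
  have rho1: "\<rho> \<ge> real d" "\<rho> \<ge> sqrt (real m)" using rho by auto
  have rpos: "\<rho> \<ge> 1" using rho1 d1 by simp
  have r2: "\<rho>\<^sup>2 = max ((real d)\<^sup>2) (real m)"
  proof (cases "real d \<le> sqrt (real m)")
    case True
    then have "(real d)\<^sup>2 \<le> (sqrt (real m))\<^sup>2" by (intro power_mono) auto
    then show ?thesis using True unfolding rho by (simp add: max_def)
  next
    case False
    then have "(sqrt (real m))\<^sup>2 < (real d)\<^sup>2" by (intro power_strict_mono) auto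
    then show ?thesis using False unfolding rho by (simp add: max_def)
  qed
  have t1: "t \<ge> 1" unfolding tdef using r2 mpos by (simp add: le_divide_eq)
  have wpos: "w i \<ge> 0" for i by (simp add: w_def)
  have pt: "exp (- (real (g x z))\<^sup>2 / (c4 * real m)) \<le> (\<Sum>i\<le>m. if real (g x z) \<le> 2^i * \<rho> then w i else 0)"
    if z: "z \<in> ?S" for z
  proof -
    let ?g = "real (g x z)"
    have gm: "?g \<le> real m" using z by simp
    have gd: "real d \<le> ?g" using dmin z by simp
    define i0 where "i0 = (LEAST i. ?g \<le> 2^i * \<rho>)"
    have exm: "?g \<le> 2^m * \<rho>"
    proof -
      have "real m \<le> 2^m" using less_exp[of m] by (metis of_nat_less_numeral_power_cancel_iff less_imp_le of_nat_numeral)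
      also have "(2::real)^m \<le> 2^m * \<rho>" using rpos by simp
      finally show ?thesis using gm by linarith
    qed
    have i0a: "?g \<le> 2^i0 * \<rho>" unfolding i0_def by (rule LeastI[of _ m]) (rule exm)
    have i0m: "i0 \<le> m" unfolding i0_def by (rule Least_le) (rule exm)
    have fw: "exp (- ?g\<^sup>2 / (c4 * real m)) \<le> w i0"
    proof (cases "i0 = 0")
      case True
      have "\<rho>\<^sup>2 \<le> real m + 4 * ?g\<^sup>2"
      proof -
        have h: "(real d)\<^sup>2 \<le> ?g\<^sup>2" using gd d1 by (intro power_mono) auto
        have "\<rho>\<^sup>2 \<le> (real d)\<^sup>2 + real m" using r2 by (simp add: max_def)
        moreover have "0 \<le> ?g\<^sup>2" by simp
        ultimately show ?thesis using h by linarith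
      qed
      then have "\<rho>\<^sup>2 / real m \<le> (real m + 4 * ?g\<^sup>2) / real m" using mpos by (intro divide_right_mono) auto
      also have "\<dots> = 1 + 4 * ?g\<^sup>2 / real m" using mpos by (simp add: add_divide_distrib)
      finally have "\<rho>\<^sup>2 / real m \<le> 1 + 4 * ?g\<^sup>2 / real m" .
      then have "t / (4 * c4) \<le> (1 + 4 * ?g\<^sup>2 / real m) / (4 * c4)"
        unfolding tdef using c4 by (intro divide_right_mono) auto
      also have "\<dots> = 1 / (4 * c4) + ?g\<^sup>2 / (c4 * real m)"
        using c4 mpos by (simp add: add_divide_distrib)
      finally have "t / (4 * c4) \<le> 1 / (4 * c4) + ?g\<^sup>2 / (c4 * real m)" .
      then have "- ?g\<^sup>2 / (c4 * real m) \<le> 1 / (4 * c4) + - (1 * t / (4 * c4))" by simp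
      then have "exp (- ?g\<^sup>2 / (c4 * real m)) \<le> exp (1 / (4 * c4) + - (1 * t / (4 * c4)))" by simp
      also have "\<dots> = exp (1 / (4 * c4)) * exp (- (1 * t / (4 * c4)))" by (rule exp_add)
      finally show ?thesis using True by (simp add: w_def)
    next
      case False
      then have "\<not> ?g \<le> 2^(i0 - 1) * \<rho>" unfolding i0_def
        by (intro not_less_Least) (use False i0_def in simp)
      then have lt: "2^(i0 - 1) * \<rho> < ?g" by simp
      have "(2::real) * 2^(i0 - 1) = 2^i0" using False by (metis power_eq_if)
      then have "2^i0 * \<rho> < 2 * ?g" using lt by (metis mult.assoc mult_less_cancel_left_pos zero_less_numeral)
      then have "(2^i0 * \<rho>)\<^sup>2 \<le> (2 * ?g)\<^sup>2" using rpos by (intro power_mono) auto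
      then have "(4::real)^i0 * \<rho>\<^sup>2 \<le> 4 * ?g\<^sup>2"
        by (simp add: power_mult_distrib power_mult[symmetric] mult.commute[of i0])
          (simp add: power_mult)
      then have "(4::real)^i0 * \<rho>\<^sup>2 / (4 * c4 * real m) \<le> 4 * ?g\<^sup>2 / (4 * c4 * real m)"
        using c4 mpos by (intro divide_right_mono) auto
      then have "(4::real)^i0 * t / (4 * c4) \<le> ?g\<^sup>2 / (c4 * real m)"
        unfolding tdef by (simp add: field_simps)
      then have "exp (- ?g\<^sup>2 / (c4 * real m)) \<le> exp (- ((4::real)^i0 * t / (4 * c4)))" by simp
      also have "\<dots> \<le> w i0" unfolding w_def using c4 by simp
      finally show ?thesis .
    qed
    also have "w i0 = (if ?g \<le> 2^i0 * \<rho> then w i0 else 0)" using i0a by simp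
    also have "\<dots> \<le> (\<Sum>i\<le>m. if ?g \<le> 2^i * \<rho> then w i else 0)"
      by (rule member_le_sum[where f = "\<lambda>i. if ?g \<le> 2^i * \<rho> then w i else 0"]) (use i0m wpos in auto)
    finally show ?thesis .
  qed
  have "(\<Sum>z\<in>?S. \<pi> z * exp (- (real (g x z))\<^sup>2 / (c4 * real m)))
     \<le> (\<Sum>z\<in>?S. \<pi> z * (\<Sum>i\<le>m. if real (g x z) \<le> 2^i * \<rho> then w i else 0))"
    by (intro sum_mono mult_left_mono pt) (auto simp: pi_pos less_imp_le)
  also have "\<dots> = (\<Sum>i\<le>m. w i * (\<Sum>z\<in>{z\<in>?S. real (g x z) \<le> 2^i * \<rho>}. \<pi> z))"
  proof -
    have "(\<Sum>z\<in>?S. \<pi> z * (\<Sum>i\<le>m. if real (g x z) \<le> 2^i * \<rho> then w i else 0))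
        = (\<Sum>i\<le>m. \<Sum>z\<in>?S. (if real (g x z) \<le> 2^i * \<rho> then w i * \<pi> z else 0))"
      by (simp add: sum_distrib_left sum.swap[of _ ?S] if_distrib mult.commute cong: if_cong)
    also have "\<dots> = (\<Sum>i\<le>m. w i * (\<Sum>z\<in>{z\<in>?S. real (g x z) \<le> 2^i * \<rho>}. \<pi> z))"
      by (simp add: sum.inter_filter[OF fS, symmetric] sum_distrib_left)
    finally show ?thesis .
  qed
  also have "\<dots> \<le> (\<Sum>i\<le>m. w i * (D^(Suc i) * Vb v \<rho>))"
  proof (intro sum_mono mult_left_mono wpos)
    fix i
    have "(\<Sum>z\<in>{z\<in>?S. real (g x z) \<le> 2^i * \<rho>}. \<pi> z) \<le> Vb v (2^(Suc i) * \<rho>)"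
      unfolding bdry_vol_def
    proof (rule sum_mono2)
      show "finite (gball E v (2 ^ Suc i * \<rho>) \<inter> A)" using finite_ball by blast
      show "{z \<in> ?S. real (g x z) \<le> 2 ^ i * \<rho>} \<subseteq> gball E v (2 ^ Suc i * \<rho>) \<inter> A"
      proof
        fix z assume z: "z \<in> {z \<in> ?S. real (g x z) \<le> 2 ^ i * \<rho>}"
        have "g v z \<le> g v x + g x z" by (rule g_tri)
        then have "real (g v z) \<le> real d + real (g x z)" using gv g_sym[of v x] by simp
        also have "\<dots> \<le> \<rho> + 2^i * \<rho>" using z rho1 by simp
        also have "\<dots> \<le> 2^(Suc i) * \<rho>" using rpos by simp
        finally show "z \<in> gball E v (2 ^ Suc i * \<rho>) \<inter> A" using z by simp
      qed
    qed (simp add: pi_pos less_imp_le)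
    also have "\<dots> \<le> D^(Suc i) * Vb v \<rho>" using v rpos by (intro Vb_iter) auto
    finally show "(\<Sum>z\<in>{z\<in>?S. real (g x z) \<le> 2^i * \<rho>}. \<pi> z) \<le> D^(Suc i) * Vb v \<rho>" .
  qed
  also have "\<dots> \<le> (\<Sum>i\<le>m. ?e * (D * ?Q * (1/2)^i * exp (- t / (8 * c4))) * Vb v \<rho>)"
  proof (rule sum_mono)
    fix i
    have "w i * (D^(Suc i) * Vb v \<rho>) = ?e * (D^(Suc i) * exp (- ((4::real)^i * t / (4 * c4)))) * Vb v \<rho>"
      by (simp add: w_def mult_ac)
    also have "\<dots> \<le> ?e * (D * ?Q * (1/2)^i * exp (- t / (8 * c4))) * Vb v \<rho>"
      by (intro mult_right_mono mult_left_mono term_bound t1 N1 Vb_nonneg) auto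
    finally show "w i * (D^(Suc i) * Vb v \<rho>) \<le> ?e * (D * ?Q * (1/2)^i * exp (- t / (8 * c4))) * Vb v \<rho>" .
  qed
  also have "\<dots> = ?e * D * ?Q * exp (- t / (8 * c4)) * Vb v \<rho> * (\<Sum>i\<le>m. (1/2::real)^i)"
    by (simp add: sum_distrib_left sum_distrib_right mult_ac)
  also have "\<dots> \<le> ?e * D * ?Q * exp (- t / (8 * c4)) * Vb v \<rho> * 2"
  proof (rule mult_left_mono)
    have "(\<Sum>i\<le>m. (1/2::real)^i) = 2 - 2 * (1/2)^(Suc m)"
      by (induction m) (auto simp: field_simps)
    then show "(\<Sum>i\<le>m. (1/2::real)^i) \<le> 2" by simp
    show "0 \<le> ?e * D * ?Q * exp (- t / (8 * c4)) * Vb v \<rho>"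
      using D1 c4 by (intro mult_nonneg_nonneg Vb_nonneg) auto
  qed
  also have "\<dots> = ?e * (2 * D * ?Q) * exp (- t / (8 * c4)) * Vb v \<rho>" by (simp add: mult_ac)
  finally show ?thesis .
qed


lemma q_bound:
  assumes v: "v \<in> A" and gv: "g x v = d" and d1: "d \<ge> 1" and dmin: "\<And>z. z \<in> A \<Longrightarrow> d \<le> g x z"
   and m1: "m \<ge> 1" and N1: "Nn \<ge> 1" "2 * D \<le> 4 ^ Nn"
   and rho: "\<rho> = max (real d) (sqrt (real m))" and tdef: "t = \<rho>\<^sup>2 / real m"
  shows "qv E \<mu> \<pi> A m x \<le> c3 / V x (sqrt (real m)) *
     (exp (1 / (4 * c4)) * (2 * D * (real Nn ^ Nn * (8 * c4) ^ Nn)) * exp (- t / (8 * c4)) * Vb v \<rho>)"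
proof -
  let ?S = "A \<inter> gball E x (real m)"
  have "qv E \<mu> \<pi> A m x = (\<Sum>w\<in>?S. kp m x w)" by (rule qv_eq) (auto simp: finite_ball)
  also have "\<dots> \<le> (\<Sum>w\<in>?S. c3 / V x (sqrt (real m)) * (\<pi> w * exp (- (real (g x w))\<^sup>2 / (c4 * real m))))"
  proof (rule sum_mono)
    fix w assume "w \<in> ?S"
    then have "g x w \<le> m" by simp
    from kp_upper[OF this] show "kp m x w \<le> c3 / V x (sqrt (real m)) * (\<pi> w * exp (- (real (g x w))\<^sup>2 / (c4 * real m)))"
      by (simp add: mult_ac)
  qed
  also have "\<dots> = c3 / V x (sqrt (real m)) * (\<Sum>w\<in>?S. \<pi> w * exp (- (real (g x w))\<^sup>2 / (c4 * real m)))"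
    by (simp add: sum_distrib_left)
  also have "\<dots> \<le> c3 / V x (sqrt (real m)) *
     (exp (1 / (4 * c4)) * (2 * D * (real Nn ^ Nn * (8 * c4) ^ Nn)) * exp (- t / (8 * c4)) * Vb v \<rho>)"
    by (rule mult_left_mono[OF key_sum[OF assms]]) (use cpos V_pos in \<open>auto intro: less_imp_le\<close>)
  finally show ?thesis .
qed

lemma partI:
  assumes v: "v \<in> A" and gv: "g x v = d" and d1: "d \<ge> 1" and dmin: "\<And>z. z \<in> A \<Longrightarrow> d \<le> g x z"
   and m1: "d\<^sup>2 \<le> m" and N1: "Nn \<ge> 1" "2 * D \<le> 4 ^ Nn"
  shows "qv E \<mu> \<pi> A m x \<le> c3 * (exp (1 / (4 * c4)) * (2 * D * (real Nn ^ Nn * (8 * c4) ^ Nn)))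
            * (Vb v (sqrt (real m)) / V x (sqrt (real m)))"
proof -
  have m1': "m \<ge> 1" using m1 d1 by (metis le_trans one_le_power)
  have "real d \<le> sqrt (real m)" using m1 by (simp add: real_le_rsqrt)
  then have rho: "sqrt (real m) = max (real d) (sqrt (real m))" by simp
  have t: "1 = (sqrt (real m))\<^sup>2 / real m" using m1' by simp
  let ?M = "exp (1 / (4 * c4)) * (2 * D * (real Nn ^ Nn * (8 * c4) ^ Nn))"
  have "qv E \<mu> \<pi> A m x \<le> c3 / V x (sqrt (real m)) * (?M * exp (- 1 / (8 * c4)) * Vb v (sqrt (real m)))"
    by (rule q_bound[OF v gv d1 dmin m1' N1 rho t])
  also have "\<dots> \<le> c3 / V x (sqrt (real m)) * (?M * 1 * Vb v (sqrt (real m)))"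
    using cpos D1 V_pos[of "sqrt (real m)" x]
    by (intro mult_left_mono mult_right_mono Vb_nonneg) auto
  also have "\<dots> = c3 * ?M * (Vb v (sqrt (real m)) / V x (sqrt (real m)))" by simp
  finally show ?thesis .
qed


lemma partII:
  assumes v: "v \<in> A" and gv: "g x v = d" and d1: "d \<ge> 1" and dmin: "\<And>z. z \<in> A \<Longrightarrow> d \<le> g x z"
   and m1: "1 \<le> m" "m < d\<^sup>2" and N1: "Nn \<ge> 1" "2 * D \<le> 4 ^ Nn" and N2: "N2 \<ge> 1" "CV' \<le> 2 ^ N2"
  shows "qv E \<mu> \<pi> A m x \<le> c3 * (exp (1 / (4 * c4)) * (2 * D * (real Nn ^ Nn * (8 * c4) ^ Nn)))
            * (8 ^ N2 * ((8 * c4) ^ N2 * real N2 ^ N2)) * (Vb v (real d) / V x (2 * real d))"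
proof -
  let ?M = "exp (1 / (4 * c4)) * (2 * D * (real Nn ^ Nn * (8 * c4) ^ Nn))"
  define s where "s = (real d)\<^sup>2 / real m"
  have c4: "c4 > 0" using cpos by simp
  have mpos: "real m > 0" using m1 by simp
  have "real m < (real d)\<^sup>2" using m1 by (metis of_nat_less_iff of_nat_power)
  then have s1: "s \<ge> 1" unfolding s_def using mpos by (simp add: le_divide_eq)
  have "sqrt (real m) < sqrt ((real d)\<^sup>2)" using \<open>real m < (real d)\<^sup>2\<close> by (simp only: real_sqrt_less_iff)
  then have "sqrt (real m) \<le> real d" by simp
  then have rho: "real d = max (real d) (sqrt (real m))" by simp
  have Mpos: "?M \<ge> 0" using D1 c4 by simp
  have Vm: "V x (sqrt (real m)) > 0" by (rule V_pos) simp
  have V2: "V x (2 * real d) > 0" by (rule V_pos) simp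
  have "qv E \<mu> \<pi> A m x \<le> c3 / V x (sqrt (real m)) * (?M * exp (- s / (8 * c4)) * Vb v (real d))"
    by (rule q_bound[OF v gv d1 dmin m1(1) N1 rho s_def])
  also have "c3 / V x (sqrt (real m)) \<le> c3 * (8 * s) ^ N2 / V x (2 * real d)"
  proof -
    have "V x (2 * real d) \<le> (8 * real d ^ 2 / real m) ^ N2 * V x (sqrt (real m))"
      by (rule V_far[OF N2(2) m1])
    also have "8 * real d ^ 2 / real m = 8 * s" by (simp add: s_def)
    finally have "V x (2 * real d) \<le> (8 * s) ^ N2 * V x (sqrt (real m))" .
    then have "c3 * V x (2 * real d) \<le> c3 * ((8 * s) ^ N2 * V x (sqrt (real m)))"
      using cpos by (intro mult_left_mono) auto
    then show ?thesis using Vm V2 by (simp add: divide_le_eq le_divide_eq mult_ac)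
  qed
  then have "c3 / V x (sqrt (real m)) * (?M * exp (- s / (8 * c4)) * Vb v (real d))
       \<le> c3 * (8 * s) ^ N2 / V x (2 * real d) * (?M * exp (- s / (8 * c4)) * Vb v (real d))"
    using Mpos D1 c4 by (intro mult_right_mono mult_nonneg_nonneg Vb_nonneg) auto
  also have "\<dots> = c3 * ?M * 8 ^ N2 * ((8 * c4) ^ N2 * ((s / (8 * c4)) ^ N2 * exp (- (s / (8 * c4)))))
                  * (Vb v (real d) / V x (2 * real d))"
    using c4 by (simp add: power_mult_distrib power_divide field_simps)
  also have "\<dots> \<le> c3 * ?M * 8 ^ N2 * ((8 * c4) ^ N2 * real N2 ^ N2) * (Vb v (real d) / V x (2 * real d))"
  proof -
    have "(s / (8 * c4)) ^ N2 * exp (- (s / (8 * c4))) \<le> real N2 ^ N2"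
      using s1 c4 N2 by (intro exp_pow_bound) auto
    then show ?thesis using cpos Mpos c4 V2 D1
      by (intro mult_right_mono mult_left_mono divide_nonneg_nonneg Vb_nonneg mult_nonneg_nonneg) auto
  qed
  finally show ?thesis by (simp add: mult_ac)
qed


lemma main_x:
  assumes v: "v \<in> A" and gv: "g x v = d" and d1: "d \<ge> 1" and dmin: "\<And>z. z \<in> A \<Longrightarrow> d \<le> g x z"
   and xA: "x \<notin> A"
   and N1: "Nn \<ge> 1" "2 * D \<le> 4 ^ Nn" and N2: "N2 \<ge> 1" "CV' \<le> 2 ^ N2"
  defines "Cm \<equiv> c3 * (exp (1 / (4 * c4)) * (2 * D * (real Nn ^ Nn * (8 * c4) ^ Nn)))"
  defines "P \<equiv> Cm * (8 ^ N2 * ((8 * c4) ^ N2 * real N2 ^ N2))"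
  shows "(\<Sum>m\<le>n. qv E \<mu> \<pi> A m x)
     \<le> (P + Cm) * (\<Sum>i\<in>{d\<^sup>2..<4 * d\<^sup>2 + n + 1}. Vb v (sqrt (real i)) / V x (sqrt (real i)))"
proof -
  let ?q = "\<lambda>m. qv E \<mu> \<pi> A m x"
  let ?T = "\<lambda>i. Vb v (sqrt (real i)) / V x (sqrt (real i))"
  let ?R = "Vb v (real d) / V x (2 * real d)"
  let ?S = "{d\<^sup>2..<4 * d\<^sup>2 + n + 1}"
  have c4: "c4 > 0" using cpos by simp
  have Cm0: "Cm \<ge> 0" unfolding Cm_def using cpos D1 by simp
  have P0: "P \<ge> 0" unfolding P_def using Cm0 c4 by simp
  have T0: "?T i \<ge> 0" for i using V_pos[of "sqrt (real i)" x] Vb_nonneg by simp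
  have R0: "?R \<ge> 0" using V_pos[of "2 * real d" x] Vb_nonneg by simp
  have "(\<Sum>m\<le>n. ?q m) \<le> (\<Sum>m\<in>{..<d\<^sup>2} \<union> {d\<^sup>2..n}. ?q m)"
    by (rule sum_mono2) (auto simp: qv_nonneg)
  also have "\<dots> = (\<Sum>m<d\<^sup>2. ?q m) + (\<Sum>m\<in>{d\<^sup>2..n}. ?q m)"
    by (rule sum.union_disjoint) auto
  also have "(\<Sum>m<d\<^sup>2. ?q m) \<le> (\<Sum>m<d\<^sup>2. P * ?R)"
  proof (rule sum_mono)
    fix m assume m: "m \<in> {..<d\<^sup>2}"
    show "?q m \<le> P * ?R"
    proof (cases "m = 0")
      case True then show ?thesis using xA mult_nonneg_nonneg[OF P0 R0] by simp
    next
      case False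
      then show ?thesis using partII[OF v gv d1 dmin _ _ N1 N2, of m] m
        unfolding P_def Cm_def by (simp add: mult_ac)
    qed
  qed
  also have "(\<Sum>m<d\<^sup>2. P * ?R) = P * (real (d\<^sup>2) * ?R)" by simp
  also have "real (d\<^sup>2) * ?R \<le> (\<Sum>i\<in>?S. ?T i)"
  proof -
    have "real (d\<^sup>2) \<le> real (4 * d\<^sup>2 - d\<^sup>2)" by simp
    then have "real (d\<^sup>2) * ?R \<le> real (4 * d\<^sup>2 - d\<^sup>2) * ?R"
      using R0 by (rule mult_right_mono)
    also have "\<dots> = (\<Sum>i\<in>{d\<^sup>2..<4 * d\<^sup>2}. ?R)" by simp
    finally have "real (d\<^sup>2) * ?R \<le> (\<Sum>i\<in>{d\<^sup>2..<4 * d\<^sup>2}. ?R)" .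
    also have "\<dots> \<le> (\<Sum>i\<in>{d\<^sup>2..<4 * d\<^sup>2}. ?T i)"
    proof (rule sum_mono)
      fix i assume i: "i \<in> {d\<^sup>2..<4 * d\<^sup>2}"
      have "real d \<le> sqrt (real i)" using i by (simp add: real_le_rsqrt)
      then have a: "Vb v (real d) \<le> Vb v (sqrt (real i))" by (rule Vb_mono)
      have "real i \<le> real (4 * d\<^sup>2)" using i by (simp only: of_nat_le_iff) simp
      then have "sqrt (real i) \<le> sqrt (real (4 * d\<^sup>2))" by (simp only: real_sqrt_le_iff)
      also have "\<dots> = 2 * real d" by (simp add: real_sqrt_mult)
      finally have b: "V x (sqrt (real i)) \<le> V x (2 * real d)" by (rule V_mono)
      show "?R \<le> ?T i"
        by (rule frac_le) (use a b Vb_nonneg V_pos in auto)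
    qed
    also have "\<dots> \<le> (\<Sum>i\<in>?S. ?T i)" by (rule sum_mono2) (auto simp: T0)
    finally show ?thesis .
  qed
  also have "(\<Sum>m\<in>{d\<^sup>2..n}. ?q m) \<le> (\<Sum>m\<in>{d\<^sup>2..n}. Cm * ?T m)"
    by (rule sum_mono) (use partI[OF v gv d1 dmin _ N1] in \<open>simp add: Cm_def\<close>)
  also have "\<dots> = Cm * (\<Sum>m\<in>{d\<^sup>2..n}. ?T m)" by (simp add: sum_distrib_left)
  also have "(\<Sum>m\<in>{d\<^sup>2..n}. ?T m) \<le> (\<Sum>i\<in>?S. ?T i)" by (rule sum_mono2) (auto simp: T0)
  finally show ?thesis using P0 Cm0 by (simp add: distrib_right mult_left_mono)
qed

end
theorem corollary2p11:
  fixes E :: "'v \<Rightarrow> 'v \<Rightarrow> bool" and \<mu> :: "'v \<Rightarrow> 'v \<Rightarrow> real" and \<pi> :: "'v \<Rightarrow> real"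
    and K :: "'v set" and vx :: "'v \<Rightarrow> 'v"
  assumes infinite_graph: "infinite (UNIV :: 'v set)"
    and sym: "\<And>x y. E x y \<longleftrightarrow> E y x"
    and irrefl: "\<And>x. \<not> E x x"
    and connected: "\<And>x y. \<exists>n. (E ^^ n) x y"
    and loc_finite: "\<And>x. finite (nbrs E x)"
    and mu_sym: "\<And>x y. \<mu> x y = \<mu> y x"
    and mu_edge: "\<And>x y. \<mu> x y \<noteq> 0 \<longleftrightarrow> E x y"
    and pi_pos: "\<And>x. \<pi> x > 0"
    and pi_ge: "\<And>x. (\<Sum>y\<in>nbrs E x. \<mu> x y) \<le> \<pi> x"
    and controlled: "\<exists>Cc>1. \<forall>x y. E x y \<longrightarrow> \<mu> x y / \<pi> x \<ge> 1 / Cc"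
    and lazy: "\<exists>Ce. 0 < Ce \<and> Ce < 1 \<and> (\<forall>x. mkernel E \<mu> \<pi> x x \<ge> Ce)"
    and harnack: "harnack_graph E \<mu> \<pi>"
    and doubling: "\<exists>D>0. \<forall>z\<in>outer_bdry E K. \<forall>r>0.
                     bdry_vol E \<pi> K z (2 * r) \<le> D * bdry_vol E \<pi> K z r"
    and vx_bdry: "\<And>x. x \<notin> K \<Longrightarrow> vx x \<in> outer_bdry E K"
    and vx_min: "\<And>x. x \<notin> K \<Longrightarrow> gdist E x (vx x) = dist_to_set E x K"
  shows "\<exists>C. \<forall>x. x \<notin> K \<and> x \<notin> inner_bdry E K \<longrightarrow>
           ennreal (hit_prob E \<mu> \<pi> K x)
             \<le> (\<Sum>n. if (dist_to_set E x K)\<^sup>2 \<le> n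
                      then ennreal (C / (gvol E \<pi> x (sqrt (real n))
                                         / bdry_vol E \<pi> K (vx x) (sqrt (real n))))
                      else 0)"
proof -
  obtain c1 c2 c3 c4 where cpos: "c1 > 0" "c2 > 0" "c3 > 0" "c4 > 0"
    and hb: "\<And>x y n. gdist E x y \<le> n \<Longrightarrow>
        c1 / gvol E \<pi> x (sqrt (real n)) * exp (- (real (gdist E x y))\<^sup>2 / (c2 * real n))
          \<le> heat_kernel E \<mu> \<pi> n x y \<and>
        heat_kernel E \<mu> \<pi> n x y
          \<le> c3 / gvol E \<pi> x (sqrt (real n)) * exp (- (real (gdist E x y))\<^sup>2 / (c4 * real n))"
    using harnack unfolding harnack_graph_def by blast
  obtain D0 where D0: "D0 > 0" "\<forall>z\<in>outer_bdry E K. \<forall>r>0.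
                     bdry_vol E \<pi> K z (2 * r) \<le> D0 * bdry_vol E \<pi> K z r"
    using doubling by blast
  define D where "D = max D0 1"
  interpret GHK E \<mu> \<pi> c1 c2 c3 c4 K D
  proof
    show "\<And>z r. z \<in> outer_bdry E K \<Longrightarrow> r > 0 \<Longrightarrow> bdry_vol E \<pi> K z (2 * r) \<le> D * bdry_vol E \<pi> K z r"
    proof -
      fix z r assume "z \<in> outer_bdry E K" "(r::real) > 0"
      then have "bdry_vol E \<pi> K z (2 * r) \<le> D0 * bdry_vol E \<pi> K z r" using D0 by blast
      also have "\<dots> \<le> D * bdry_vol E \<pi> K z r"
      proof (rule mult_right_mono)
        show "D0 \<le> D" by (simp add: D_def)
        show "0 \<le> bdry_vol E \<pi> K z r" unfolding bdry_vol_def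
          by (rule sum_nonneg) (simp add: pi_pos less_imp_le)
      qed
      finally show "bdry_vol E \<pi> K z (2 * r) \<le> D * bdry_vol E \<pi> K z r" .
    qed
  qed (use sym connected loc_finite mu_sym mu_edge pi_pos pi_ge controlled cpos hb in \<open>auto simp: D_def\<close>)
  obtain n1 where n1: "2 * D < 4 ^ n1" using real_arch_pow[of 4 "2 * D"] by auto
  define Nn where "Nn = max n1 1"
  have N1: "Nn \<ge> 1" "2 * D \<le> 4 ^ Nn"
  proof -
    show "Nn \<ge> 1" by (simp add: Nn_def)
    have "(4::real) ^ n1 \<le> 4 ^ Nn" by (rule power_increasing) (auto simp: Nn_def)
    then show "2 * D \<le> 4 ^ Nn" using n1 by linarith
  qed
  obtain n2 where n2: "CV' < 2 ^ n2" using real_arch_pow[of 2 "CV'"] by auto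
  define N2 where "N2 = max n2 1"
  have N2: "N2 \<ge> 1" "CV' \<le> 2 ^ N2"
  proof -
    show "N2 \<ge> 1" by (simp add: N2_def)
    have "(2::real) ^ n2 \<le> 2 ^ N2" by (rule power_increasing) (auto simp: N2_def)
    then show "CV' \<le> 2 ^ N2" using n2 by linarith
  qed
  define Cm where "Cm = c3 * (exp (1 / (4 * c4)) * (2 * D * (real Nn ^ Nn * (8 * c4) ^ Nn)))"
  define P where "P = Cm * (8 ^ N2 * ((8 * c4) ^ N2 * real N2 ^ N2))"
  have c4: "c4 > 0" using cpos by simp
  have Cm0: "Cm \<ge> 0" unfolding Cm_def using cpos D_def by simp
  have P0: "P \<ge> 0" unfolding P_def using Cm0 c4 by simp
  show ?thesis
  proof (intro exI allI impI)
    fix x assume x: "x \<notin> K \<and> x \<notin> inner_bdry E K"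
    then have xK: "x \<notin> K" by simp
    define d where "d = dist_to_set E x K"
    define v where "v = vx x"
    let ?T = "\<lambda>i. Vb v (sqrt (real i)) / V x (sqrt (real i))"
    define f where "f = (\<lambda>n. if (dist_to_set E x K)\<^sup>2 \<le> n
                      then ennreal ((P + Cm) / (gvol E \<pi> x (sqrt (real n))
                                         / bdry_vol E \<pi> K (vx x) (sqrt (real n))))
                      else 0)"
    have v: "v \<in> A" using vx_bdry[OF xK] by (simp add: v_def)
    have gv: "g x v = d" using vx_min[OF xK] by (simp add: v_def d_def)
    have vK: "v \<in> K" using v by (simp add: outer_bdry_def)
    have d1: "d \<ge> 1"
    proof -
      have "v \<noteq> x" using vK xK by auto
      then have "g x v \<noteq> 0" using g_zero by simp
      then show ?thesis using gv by simp
    qed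
    have dmin: "d \<le> g x z" if "z \<in> A" for z
    proof -
      have "z \<in> K" using that by (simp add: outer_bdry_def)
      then show ?thesis unfolding d_def dist_to_set_def
        by (intro cInf_lower) (auto intro: bdd_belowI[of _ 0])
    qed
    have xA: "x \<notin> A" using xK by (simp add: outer_bdry_def)
    have bnd: "ennreal (hit_le E \<mu> \<pi> K n x) \<le> suminf f" for n
    proof -
      let ?S = "{d\<^sup>2..<4 * d\<^sup>2 + n + 1}"
      have "hit_le E \<mu> \<pi> K n x \<le> (\<Sum>m\<le>n. qv E \<mu> \<pi> A m x)"
        by (rule hit_bound) (simp add: xK)
      also have "\<dots> \<le> (P + Cm) * (\<Sum>i\<in>?S. ?T i)"
        using main_x[OF v gv d1 dmin xA N1 N2, of n] unfolding P_def Cm_def by simp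
      finally have h: "hit_le E \<mu> \<pi> K n x \<le> (\<Sum>i\<in>?S. (P + Cm) * ?T i)"
        by (simp only: sum_distrib_left)
      have T0: "(P + Cm) * ?T i \<ge> 0" for i
        using V_pos[of "sqrt (real i)" x] Vb_nonneg P0 Cm0 by simp
      have "ennreal (hit_le E \<mu> \<pi> K n x) \<le> ennreal (\<Sum>i\<in>?S. (P + Cm) * ?T i)"
        using h by (rule ennreal_leI)
      also have "\<dots> = (\<Sum>i\<in>?S. ennreal ((P + Cm) * ?T i))"
        by (rule sum_ennreal[symmetric]) (use T0 in auto)
      also have "\<dots> = (\<Sum>i\<in>?S. f i)"
        by (rule sum.cong) (auto simp: f_def d_def v_def)
      also have "\<dots> \<le> suminf f" by (rule sum_le_suminf) auto
      finally show ?thesis .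
    qed
    have "ennreal (hit_prob E \<mu> \<pi> K x) \<le> suminf f"
    proof (cases "suminf f")
      case (real r)
      have "hit_le E \<mu> \<pi> K n x \<le> r" for n using bnd[of n] real by simp
      then have "hit_prob E \<mu> \<pi> K x \<le> r" unfolding hit_prob_def by (intro cSUP_least) auto
      then show ?thesis using real by (simp add: ennreal_leI)
    next
      case top then show ?thesis by simp
    qed
    then show "ennreal (hit_prob E \<mu> \<pi> K x)
             \<le> (\<Sum>n. if (dist_to_set E x K)\<^sup>2 \<le> n
                      then ennreal ((P + Cm) / (gvol E \<pi> x (sqrt (real n))
                                         / bdry_vol E \<pi> K (vx x) (sqrt (real n))))
                      else 0)" unfolding f_def .
  qed
qed

end
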